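(* Let $n$ be an integer with $1\le n\le d'-2$ and let $\{h_i\}_{i=0}^{n+1}$ be a sequence in $\mathbb F$ such that (i) $h_{i+2}-h_{i-1}=(q^2+1+q^{-2})(h_{i+1}-h_i)$ for all $i=1,2,\dots,n-1$, and (ii) there are integers $0\le j<k<\ell\le n+1$ with $h_j=h_k=h_\ell=0$. Then $h_i=0$ for all $i=0,1,\dots,n+1$.
   Context: $\mathbb F$ is an algebraically closed field and $q\in\mathbb F^\times$ is a root of unity of order $d\notin\{1,2,4\}$; $d'=d$ if $d$ is odd and $d'=d/2$ if $d$ is even (the order of $q^2$). *)

theory Defs
  imports "HOL-Computational_Algebra.Polynomial"
begin

definition alg_closed_field :: "'a::field itself \<Rightarrow> bool" where
  "alg_closed_field _ \<longleftrightarrow> (\<forall>p::'a poly. degree p \<ge> 1 \<longrightarrow> (\<exists>x. poly p x = 0))"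

definition root_of_unity_of_order :: "'a::field \<Rightarrow> nat \<Rightarrow> bool" where
  "root_of_unity_of_order q d \<longleftrightarrow> d > 0 \<and> q ^ d = 1 \<and> (\<forall>m. 0 < m \<and> m < d \<longrightarrow> q ^ m \<noteq> 1)"

text \<open>d' = d if d odd, d/2 if d even (the order of q^2).\<close>
definition dprime :: "nat \<Rightarrow> nat" where
  "dprime d = (if odd d then d else d div 2)"

end

theory Submission
  imports Defs
begin

lemma quad_zero:
  fixes a b c x y z :: "'a::field"
  assumes "c + a*x + b*x^2 = 0" "c + a*y + b*y^2 = 0" "c + a*z + b*z^2 = 0"
    and "x \<noteq> y" "x \<noteq> z" "y \<noteq> z"
  shows "a = 0 \<and> b = 0 \<and> c = 0"
proof -
  have "(x - y) * (a + b*(x+y)) = (c + a*x + b*x^2) - (c + a*y + b*y^2)" by (simp add: algebra_simps power2_eq_square)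
  hence "(x - y) * (a + b*(x+y)) = 0" using assms(1,2) by simp
  hence 1: "a + b*(x+y) = 0" using assms(4) by simp
  have "(x - z) * (a + b*(x+z)) = (c + a*x + b*x^2) - (c + a*z + b*z^2)" by (simp add: algebra_simps power2_eq_square)
  hence "(x - z) * (a + b*(x+z)) = 0" using assms(1,3) by simp
  hence 2: "a + b*(x+z) = 0" using assms(5) by simp
  have "b * (y - z) = (a + b*(x+y)) - (a + b*(x+z))" by (simp add: algebra_simps)
  hence "b * (y - z) = 0" using 1 2 by simp
  hence b: "b = 0" using assms(6) by simp
  with 1 have a: "a = 0" by simp
  with b assms(1) show ?thesis by simp
qed

lemma geo_step:
  fixes x y :: "'a::field"
  assumes "x * y = 1"
  shows "x^(p+3) - x^p = (x + 1 + y) * (x^(p+2) - x^(p+1))"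
proof -
  have "(x + 1 + y) * (x^(p+2) - x^(p+1)) = x^p * (x^3 + x^2 + (x*y)*x - x^2 - x - x*y)"
    by (simp add: algebra_simps power_add power2_eq_square power3_eq_cube)
  also have "\<dots> = x^p * (x^3 - 1)" using assms by simp
  finally show ?thesis by (simp add: algebra_simps power_add)
qed

lemma ord_dvd:
  fixes q :: "'a::field"
  assumes "root_of_unity_of_order q d" "q ^ N = 1"
  shows "d dvd N"
proof -
  have d: "d > 0" "q^d = 1" "\<And>m. 0 < m \<Longrightarrow> m < d \<Longrightarrow> q^m \<noteq> 1"
    using assms(1) unfolding root_of_unity_of_order_def by auto
  have "q ^ N = q ^ (N mod d) * (q^d)^(N div d)"
    by (metis mod_div_mult_eq power_add power_mult mult.commute)
  hence "q ^ (N mod d) = 1" using assms(2) d(2) by simp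
  moreover have "N mod d < d" using d(1) by simp
  ultimately have "N mod d = 0" using d(3) by blast
  thus ?thesis by auto
qed

theorem lemma4p2:
  fixes q :: "'a::field" and d n :: nat and h :: "nat \<Rightarrow> 'a"
  assumes "alg_closed_field TYPE('a)"
    and "root_of_unity_of_order q d"
    and "d \<notin> {1, 2, 4}"
    and "1 \<le> n" and "n + 2 \<le> dprime d"
    and "\<And>i. 1 \<le> i \<Longrightarrow> i \<le> n - 1 \<Longrightarrow>
           h (i + 2) - h (i - 1) = (q ^ 2 + 1 + inverse q ^ 2) * (h (i + 1) - h i)"
    and "\<exists>j k l. j < k \<and> k < l \<and> l \<le> n + 1 \<and> h j = 0 \<and> h k = 0 \<and> h l = 0"
  shows "\<forall>i \<le> n + 1. h i = 0"
proof -
  note rd = assms(2)[unfolded root_of_unity_of_order_def]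
  define r where "r = q^2"
  define s where "s = inverse r"
  have q0: "q \<noteq> 0" using rd by (metis power_0_left zero_neq_one less_not_refl)
  hence r0: "r \<noteq> 0" by (simp add: r_def)
  have rs: "r * s = 1" "s * r = 1" using r0 by (auto simp: s_def)
  have rord: "r ^ m \<noteq> 1" if "0 < m" "m < dprime d" for m
  proof
    assume "r ^ m = 1"
    hence "q ^ (2*m) = 1" by (simp add: r_def power_mult)
    hence dv: "d dvd 2*m" using ord_dvd assms(2) by blast
    show False
    proof (cases "odd d")
      case True
      hence "coprime d 2" by (simp add: coprime_commute)
      with dv have "d dvd m" using coprime_dvd_mult_right_iff by blast
      moreover have "m < d" using that True by (simp add: dprime_def)
      ultimately show False using that(1) by (meson nat_dvd_not_less)
    next
      case False
      hence "2*m < d" using that by (auto simp: dprime_def)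
      thus False using dv that(1) by (meson nat_dvd_not_less mult_pos_pos zero_less_numeral)
    qed
  qed
  have r1: "r \<noteq> 1" using rord[of 1] assms(4,5) by simp
  have r2: "r^2 \<noteq> 1" using rord[of 2] assms(4,5) by simp
  have rm1: "r - 1 \<noteq> 0" using r1 by simp
  have rr1: "r^2 - 1 \<noteq> 0" using r2 by simp
  define u where "u = (h 1 - h 0) / (r - 1)"
  define v where "v = (h 2 - h 1) / (r - 1)"
  define c where "c = r^2 * (v - r*u) / (r^2 - 1)"
  define b where "b = u + c / r"
  define a where "a = h 0 - b - c"
  have hu: "(r - 1) * u = h 1 - h 0" using rm1 by (simp add: u_def)
  have hv: "(r - 1) * v = h 2 - h 1" using rm1 by (simp add: v_def)
  have hc: "c * (r^2 - 1) = r^2 * (v - r*u)" using rr1 by (simp add: c_def)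
  have hb: "b * r = u * r + c" using r0 by (simp add: b_def field_simps)
  define f where "f i = a + b * r^i + c * s^i" for i
  have f0: "f 0 = h 0" by (simp add: f_def a_def)
  have hb': "b = u + c*s" using r0 by (simp add: b_def s_def divide_inverse)
  have d1: "f 1 - f 0 = (r-1)*u"
  proof -
    have "f 1 - f 0 = (u + c*s)*r - (u+c*s) + c*s - c" by (simp add: f_def hb' algebra_simps)
    also have "\<dots> = (r-1)*u + c*(s*r) - c" by (simp add: algebra_simps)
    finally show ?thesis using rs by simp
  qed
  have f1: "f 1 = h 1" using d1 hu f0 by (simp add: algebra_simps)
  have e: "r*u + c*(1 - s^2) = v"
  proof -
    have "r^2 * (r*u + c*(1 - s^2)) = r^3*u + c*r^2 - c*((r*s)^2)"
      by (simp add: algebra_simps power2_eq_square power3_eq_cube)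
    also have "\<dots> = r^3*u + c*(r^2 - 1)" using rs by (simp add: algebra_simps)
    also have "\<dots> = r^2 * v" using hc by (simp add: algebra_simps power2_eq_square power3_eq_cube)
    finally show ?thesis using r0 by simp
  qed
  have d2: "f 2 - f 1 = (r-1)*(r*u + c*(1 - s^2))"
  proof -
    have "f 2 - f 1 = (u + c*s)*(r^2 - r) + c*(s^2 - s)" by (simp add: f_def hb' algebra_simps)
    also have "\<dots> = u*r*(r-1) + c*((s*r)*r - s*r + s^2 - s)"
      by (simp add: algebra_simps power2_eq_square)
    also have "\<dots> = u*r*(r-1) + c*(r - 1 + s^2 - s)" using rs by simp
    also have "\<dots> = (r-1)*(r*u + c*(1 - s^2))"
    proof -
      have "(r-1)*(1 - s^2) = r - (r*s)*s - 1 + s^2" by (simp add: algebra_simps power2_eq_square)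
      hence "(r-1)*(1 - s^2) = r - 1 + s^2 - s" using rs by simp
      hence "(r-1)*(r*u + c*(1 - s^2)) = u*r*(r-1) + c*((r-1)*(1 - s^2))" by (simp add: algebra_simps)
      thus ?thesis using \<open>(r-1)*(1 - s^2) = r - 1 + s^2 - s\<close> by simp
    qed
    finally show ?thesis .
  qed
  have "f 2 - f 1 = h 2 - h 1" using d2 e hv by simp
  hence f2: "f 2 = h 2" using f1 by simp
  have fh: "h i = f i" if "i \<le> n + 1" for i
    using that
  proof (induction i rule: less_induct)
    case (less i)
    show ?case
    proof (cases "i \<le> 2")
      case True
      then consider "i = 0" | "i = 1" | "i = 2" by linarith
      then show ?thesis using f0 f1 f2 by cases auto
    next
      case False
      define p where "p = i - 3"
      have p: "i = p + 3" using False by (simp add: p_def)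
      have pn: "p + 1 \<le> n - 1" using less.prems p by simp
      have A: "h (p + 1 + 2) - h (p + 1 - 1) = (q ^ 2 + 1 + inverse q ^ 2) * (h (p + 1 + 1) - h (p + 1))"
        by (rule assms(6)) (simp, rule pn)
      have qs: "q ^ 2 + 1 + inverse q ^ 2 = r + 1 + s" by (simp add: r_def s_def power_inverse)
      have i1: "p + 1 + 2 = p + 3" "p + 1 - 1 = p" "p + 1 + 1 = p + 2" by simp_all
      have rec: "h (p + 3) - h p = (r + 1 + s) * (h (p + 2) - h (p + 1))"
        using A unfolding qs i1 .
      have hs: "h (p+2) = f (p+2)" "h (p+1) = f (p+1)" "h p = f p"
        using less.IH less.prems p by auto
      have F: "f (p + 3) - f p = (r + 1 + s) * (f (p + 2) - f (p + 1))"
      proof -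
        have "f (p + 3) - f p = b * (r^(p+3) - r^p) + c * (s^(p+3) - s^p)"
          by (simp add: f_def algebra_simps)
        also have "\<dots> = b * ((r + 1 + s) * (r^(p+2) - r^(p+1))) + c * ((s + 1 + r) * (s^(p+2) - s^(p+1)))"
          by (simp only: geo_step[OF rs(1), of p] geo_step[OF rs(2), of p])
        also have "\<dots> = (r + 1 + s) * (f (p + 2) - f (p + 1))"
          by (simp add: f_def algebra_simps)
        finally show ?thesis .
      qed
      have "h (p+3) = (r+1+s)*(h (p+2) - h (p+1)) + h p" using rec by (simp add: diff_eq_eq)
      also have "\<dots> = (r+1+s)*(f (p+2) - f (p+1)) + f p" by (simp only: hs)
      also have "\<dots> = f (p+3)" using F by (simp add: diff_eq_eq)
      finally show ?thesis using p by simp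
    qed
  qed
  obtain j k l where jkl: "j < k" "k < l" "l \<le> n + 1" "h j = 0" "h k = 0" "h l = 0"
    using assms(7) by blast
  have zero: "c + a * r^i + b * (r^i)^2 = 0" if "i \<le> n + 1" "h i = 0" for i
  proof -
    have "f i = 0" using fh that by simp
    hence "r^i * f i = 0" by simp
    moreover have "(r^i) * (s^i) = 1" using rs by (metis power_mult_distrib power_one)
    moreover have "r^i * f i = a*r^i + b*(r^i)^2 + c*(r^i*s^i)"
      by (simp add: f_def algebra_simps power2_eq_square)
    ultimately show ?thesis using \<open>f i = 0\<close> by (simp add: algebra_simps)
  qed
  have dist: "r^x \<noteq> r^y" if "x < y" "y \<le> n + 1" for x y
  proof
    assume "r^x = r^y"
    have "r^x * r^(y-x) = r^y" using that by (simp flip: power_add)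
    hence "r^x * r^(y-x) = r^x * 1" using \<open>r^x = r^y\<close> by simp
    hence "r^(y-x) = 1" using r0 by simp
    thus False using rord[of "y-x"] that assms(5) by simp
  qed
  have z1: "c + a * r^j + b * (r^j)^2 = 0" using zero jkl by simp
  have z2: "c + a * r^k + b * (r^k)^2 = 0" using zero jkl by simp
  have z3: "c + a * r^l + b * (r^l)^2 = 0" using zero jkl by simp
  have n1: "r^j \<noteq> r^k" using dist jkl by simp
  have n2: "r^j \<noteq> r^l" using dist jkl by simp
  have n3: "r^k \<noteq> r^l" using dist jkl by simp
  have "a = 0 \<and> b = 0 \<and> c = 0" using quad_zero[OF z1 z2 z3 n1 n2 n3] .
  thus ?thesis using fh by (simp add: f_def)
qed

end
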